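(* For every fixed nonnegative integer $k$, \[ \lim_{n\to\infty}\frac{\gamma_{2t}(K_n\Box K_{n+k})}{n}=\frac32. \]
   Context: For a graph $G=(V,E)$, a set $S\subseteq V$ is a total $2$-dominating set if every vertex of $V$ (including those in $S$) is adjacent to at least $2$ vertices of $S$; $\gamma_{2t}(G)$ is the minimum cardinality of such a set. $G\Box H$ denotes the Cartesian product: vertex set $V(G)\times V(H)$, with $(u_1,v_1)\sim(u_2,v_2)$ iff either $u_1=u_2$ and $v_1\sim v_2$, or $v_1=v_2$ and $u_1\sim u_2$. $K_n$ is the complete graph on $n$ vertices. *)

theory Defs
  imports "HOL-Analysis.Analysis"
begin

text \<open>A (simple) graph is given by a vertex set V and a symmetric irreflexive adjacency relation E.\<close>

definition total_k_dominating :: "nat \<Rightarrow> 'a set \<Rightarrow> ('a \<Rightarrow> 'a \<Rightarrow> bool) \<Rightarrow> 'a set \<Rightarrow> bool" where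
  "total_k_dominating k V E S \<longleftrightarrow>
     S \<subseteq> V \<and> (\<forall>v\<in>V. card {u\<in>S. E v u} \<ge> k)"

definition gamma_kt :: "nat \<Rightarrow> 'a set \<Rightarrow> ('a \<Rightarrow> 'a \<Rightarrow> bool) \<Rightarrow> nat" where
  "gamma_kt k V E = (LEAST m. \<exists>S. finite S \<and> total_k_dominating k V E S \<and> card S = m)"

definition K_verts :: "nat \<Rightarrow> nat set" where "K_verts n = {..<n}"
definition K_adj :: "nat \<Rightarrow> nat \<Rightarrow> bool" where "K_adj u v \<longleftrightarrow> u \<noteq> v"

definition cart_verts :: "'a set \<Rightarrow> 'b set \<Rightarrow> ('a \<times> 'b) set" where
  "cart_verts V W = V \<times> W"
definition cart_adj :: "('a \<Rightarrow> 'a \<Rightarrow> bool) \<Rightarrow> ('b \<Rightarrow> 'b \<Rightarrow> bool) \<Rightarrow> 'a \<times> 'b \<Rightarrow> 'a \<times> 'b \<Rightarrow> bool" where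
  "cart_adj E F x y \<longleftrightarrow> (fst x = fst y \<and> F (snd x) (snd y)) \<or> (snd x = snd y \<and> E (fst x) (fst y))"

end

theory Submission
  imports Defs
begin

lemma card_ge2: "finite N \<Longrightarrow> x \<in> N \<Longrightarrow> y \<in> N \<Longrightarrow> x \<noteq> y \<Longrightarrow> 2 \<le> card N"
proof -
  assume a: "finite N" "x \<in> N" "y \<in> N" "x \<noteq> y"
  have "{x,y} \<subseteq> N" using a by auto
  hence "card {x,y} \<le> card N" using a(1) by (intro card_mono)
  thus ?thesis using a(4) by simp
qed

lemma adj_iff: "cart_adj K_adj K_adj x y \<longleftrightarrow> (fst x = fst y \<and> snd x \<noteq> snd y) \<or> (snd x = snd y \<and> fst x \<noteq> fst y)"
  by (auto simp: cart_adj_def K_adj_def)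

lemma sum_rows:
  fixes S :: "'a set" and p :: "'a \<Rightarrow> nat"
  assumes "finite S" "\<forall>u\<in>S. p u < n"
  shows "(\<Sum>i<n. card {u\<in>S. p u = i \<and> P u}) = card {u\<in>S. P u}"
proof -
  have "(\<Sum>y\<in>{..<n}. sum (\<lambda>_. 1::nat) {x. x \<in> {u\<in>S. P u} \<and> p x = y}) = sum (\<lambda>_. 1) {u\<in>S. P u}"
    by (rule sum.group) (use assms in auto)
  moreover have "\<And>y. {x. x \<in> {u\<in>S. P u} \<and> p x = y} = {u\<in>S. p u = y \<and> P u}" by auto
  ultimately show ?thesis by simp
qed

lemma half:
  fixes S :: "(nat\<times>nat) set" and p q :: "nat\<times>nat \<Rightarrow> nat"
  assumes fin: "finite S" and sub: "\<forall>u\<in>S. p u < n"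
  and rdef: "\<And>i. r i = card {u\<in>S. p u = i}"
  and r1: "\<forall>i<n. 1 \<le> r i"
  and s4: "\<forall>u\<in>S. 4 \<le> r (p u) + c (q u)"
  shows "card {u\<in>S. r (p u) = 1} + card {u\<in>S. c (q u) = 1} \<le> card S
       \<and> 6*n + card {u\<in>S. c (q u) = 1} \<le> 3 * card S + 3 * card {u\<in>S. r (p u) = 1}"
proof -
  define A where "A i = card {u\<in>S. p u = i \<and> r (p u) = 1}" for i
  define B where "B i = card {u\<in>S. p u = i \<and> c (q u) = 1}" for i
  have row: "A i + B i \<le> r i \<and> 6 + B i \<le> 3 * r i + 3 * A i" if i: "i < n" for i
  proof -
    have "{u\<in>S. p u = i \<and> c (q u) = 1} \<subseteq> {u\<in>S. p u = i}" by auto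
    hence b1: "B i \<le> r i" unfolding B_def rdef using fin by (intro card_mono) auto
    have b2: "r i \<ge> 3" if "B i > 0"
    proof -
      from that have "{u\<in>S. p u = i \<and> c (q u) = 1} \<noteq> {}" unfolding B_def
        by (simp add: card_gt_0_iff)
      then obtain u where "u \<in> S" "p u = i" "c (q u) = 1" by blast
      with s4 show ?thesis by force
    qed
    have a1: "A i = (if r i = 1 then r i else 0)"
    proof (cases "r i = 1")
      case True
      hence e: "{u\<in>S. p u = i \<and> r (p u) = 1} = {u\<in>S. p u = i}" by auto
      show ?thesis using True unfolding A_def e rdef[symmetric] by simp
    next
      case False
      hence e: "{u\<in>S. p u = i \<and> r (p u) = 1} = {}" by auto
      show ?thesis using False unfolding A_def e by simp
    qed
    have "1 \<le> r i" using r1 i by auto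
    with b1 b2 a1 show ?thesis by (cases "B i > 0"; cases "r i = 1"; auto)
  qed
  have sr: "(\<Sum>i<n. r i) = card S" using sum_rows[OF fin sub, of "\<lambda>_. True"] by (simp add: rdef)
  have sa: "(\<Sum>i<n. A i) = card {u\<in>S. r (p u) = 1}"
    unfolding A_def by (rule sum_rows[OF fin sub])
  have sb: "(\<Sum>i<n. B i) = card {u\<in>S. c (q u) = 1}"
    unfolding B_def by (rule sum_rows[OF fin sub])
  have "(\<Sum>i<n. A i + B i) \<le> (\<Sum>i<n. r i)" by (rule sum_mono) (use row in auto)
  moreover have "(\<Sum>i<n. 6 + B i) \<le> (\<Sum>i<n. 3 * r i + 3 * A i)" by (rule sum_mono) (use row in auto)
  ultimately show ?thesis using sr sa sb by (simp add: sum.distrib sum_distrib_left[symmetric])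
qed

lemma lower:
  fixes S :: "(nat\<times>nat) set"
  assumes fin: "finite S" and nm: "n \<le> m"
  and dom: "total_k_dominating 2 (cart_verts (K_verts n) (K_verts m)) (cart_adj K_adj K_adj) S"
  shows "3*n \<le> 2 * card S"
proof -
  define r where "r i = card {u\<in>S. fst u = i}" for i
  define c where "c j = card {u\<in>S. snd u = j}" for j
  have sub: "S \<subseteq> {..<n} \<times> {..<m}" using dom by (auto simp: total_k_dominating_def cart_verts_def K_verts_def)
  have key: "2 + (if (i,j)\<in>S then 2 else 0) \<le> r i + c j" if ij: "i<n" "j<m" for i j
  proof -
    let ?v = "(i,j)"
    let ?N = "{u\<in>S. cart_adj K_adj K_adj ?v u}"
    let ?R = "{u\<in>S. fst u = i}" and ?C = "{u\<in>S. snd u = j}"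
    have two: "2 \<le> card ?N" using dom ij by (auto simp: total_k_dominating_def cart_verts_def K_verts_def)
    have "?N \<subseteq> (?R - {?v}) \<union> (?C - {?v})" by (auto simp: adj_iff)
    hence "card ?N \<le> card ((?R - {?v}) \<union> (?C - {?v}))" using fin by (intro card_mono) auto
    also have "\<dots> \<le> card (?R - {?v}) + card (?C - {?v})" by (rule card_Un_le)
    finally have le: "card ?N \<le> card (?R - {?v}) + card (?C - {?v})" .
    have fR: "finite ?R" "finite ?C" using fin by auto
    have e1: "card (?R - {?v}) + (if ?v \<in> S then 1 else 0) = r i"
    proof (cases "?v \<in> S")
      case True
      hence "?v \<in> ?R" by simp
      hence "?R \<noteq> {}" by blast
      hence "card ?R \<ge> 1" using fR by (simp add: Suc_le_eq card_gt_0_iff)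
      thus ?thesis using True \<open>?v \<in> ?R\<close> fR unfolding r_def by (simp add: card_Diff_singleton)
    next
      case False
      hence "?R - {?v} = ?R" by auto
      thus ?thesis using False unfolding r_def by simp
    qed
    have e2: "card (?C - {?v}) + (if ?v \<in> S then 1 else 0) = c j"
    proof (cases "?v \<in> S")
      case True
      hence "?v \<in> ?C" by simp
      hence "?C \<noteq> {}" by blast
      hence "card ?C \<ge> 1" using fR by (simp add: Suc_le_eq card_gt_0_iff)
      thus ?thesis using True \<open>?v \<in> ?C\<close> fR unfolding c_def by (simp add: card_Diff_singleton)
    next
      case False
      hence "?C - {?v} = ?C" by auto
      thus ?thesis using False unfolding c_def by simp
    qed
    show ?thesis using two le e1 e2 by (cases "?v \<in> S") auto
  qed
  have subf: "\<forall>u\<in>S. fst u < n" and subs: "\<forall>u\<in>S. snd u < m" using sub by auto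
  have sr: "(\<Sum>i<n. r i) = card S" using sum_rows[OF fin subf, of "\<lambda>_. True"] by (simp add: r_def)
  have sc: "(\<Sum>j<m. c j) = card S" using sum_rows[OF fin subs, of "\<lambda>_. True"] by (simp add: c_def)
  show ?thesis
  proof (cases "\<exists>i<n. r i = 0")
    case True
    then obtain i where i: "i<n" "r i = 0" by blast
    have "2 \<le> c j" if "j<m" for j
    proof -
      have "(i,j) \<notin> S"
      proof
        assume "(i,j) \<in> S"
        hence "(i,j) \<in> {u\<in>S. fst u = i}" by simp
        hence "{u\<in>S. fst u = i} \<noteq> {}" by blast
        thus False using i fin unfolding r_def by (simp add: card_gt_0_iff) blast
      qed
      thus ?thesis using key[OF i(1) that] i(2) by simp
    qed
    hence "(\<Sum>j<m. (2::nat)) \<le> (\<Sum>j<m. c j)" by (intro sum_mono) auto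
    thus ?thesis using sc nm by simp
  next
    case rpos: False
    show ?thesis
    proof (cases "\<exists>j<m. c j = 0")
      case True
      then obtain j where j: "j<m" "c j = 0" by blast
      have "2 \<le> r i" if "i<n" for i
      proof -
        have "(i,j) \<notin> S"
        proof
          assume "(i,j) \<in> S"
          hence "(i,j) \<in> {u\<in>S. snd u = j}" by simp
          hence "{u\<in>S. snd u = j} \<noteq> {}" by blast
        thus False using j fin unfolding c_def by (simp add: card_gt_0_iff) blast
        qed
        thus ?thesis using key[OF that j(1)] j(2) by simp
      qed
      hence "(\<Sum>i<n. (2::nat)) \<le> (\<Sum>i<n. r i)" by (intro sum_mono) auto
      thus ?thesis using sr by simp
    next
      case cpos: False
      have s4: "\<forall>u\<in>S. 4 \<le> r (fst u) + c (snd u)"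
      proof
        fix u assume u: "u \<in> S"
        obtain i j where "u = (i,j)" by (cases u)
        with u sub key[of i j] show "4 \<le> r (fst u) + c (snd u)" by auto
      qed
      have s4': "\<forall>u\<in>S. 4 \<le> c (snd u) + r (fst u)" using s4 by auto
      have r1: "\<forall>i<n. 1 \<le> r i" using rpos by auto
      have c1: "\<forall>j<m. 1 \<le> c j" using cpos by auto
      note h1 = half[where c=c and q=snd, OF fin subf r_def r1 s4]
      note h2 = half[where c=r and q=fst, OF fin subs c_def c1 s4']
      show ?thesis using h1 h2 nm by linarith
    qed
  qed
qed

lemma card4: "finite A \<Longrightarrow> finite B \<Longrightarrow> finite C \<Longrightarrow> finite D \<Longrightarrow>
  card (A \<union> B \<union> C \<union> D) \<le> card A + card B + card C + card D"
proof -
  have "card (A \<union> B \<union> C \<union> D) \<le> card (A \<union> B \<union> C) + card D" by (rule card_Un_le)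
  moreover have "card (A \<union> B \<union> C) \<le> card (A \<union> B) + card C" by (rule card_Un_le)
  moreover have "card (A \<union> B) \<le> card A + card B" by (rule card_Un_le)
  ultimately show ?thesis by linarith
qed

lemma three: "(r::nat) < 3 \<Longrightarrow> \<exists>r' r''. r' < 3 \<and> r'' < 3 \<and> r' \<noteq> r \<and> r'' \<noteq> r \<and> r' \<noteq> r''"
proof -
  assume "r < 3"
  hence "r = 0 \<or> r = 1 \<or> r = 2" by auto
  moreover have "r = 0 \<Longrightarrow> ?thesis" by (rule exI[of _ 1], rule exI[of _ 2]) simp
  moreover have "r = 1 \<Longrightarrow> ?thesis" by (rule exI[of _ 0], rule exI[of _ 2]) simp
  moreover have "r = 2 \<Longrightarrow> ?thesis" by (rule exI[of _ 0], rule exI[of _ 1]) simp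
  ultimately show ?thesis by blast
qed

lemma upper:
  assumes n4: "4 \<le> n"
  shows "\<exists>S. finite S \<and> total_k_dominating 2 (cart_verts (K_verts n) (K_verts (n+k))) (cart_adj K_adj K_adj) S
           \<and> 2 * card S \<le> 3*n + 36 + 6*k"
proof -
  define q where "q = n div 4"
  define m where "m = n + k"
  define f1 where "f1 = (\<lambda>(b::nat,r::nat). (4*b+r, 4*b+3))"
  define f2 where "f2 = (\<lambda>(b::nat,r::nat). (4*b+3, 4*b+r))"
  define g1 where "g1 = (\<lambda>(i::nat,r::nat). (i, r))"
  define g2 where "g2 = (\<lambda>(j::nat,r::nat). (r, j))"
  define S where "S = f1 ` ({..<q}\<times>{..<3}) \<union> f2 ` ({..<q}\<times>{..<3}) \<union> g1 ` ({4*q..<n}\<times>{..<3}) \<union> g2 ` ({4*q..<m}\<times>{..<3})"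
  have q4: "4*q \<le> n" "n \<le> 4*q + 3" unfolding q_def by auto
  have nm: "n \<le> m" unfolding m_def by simp
  have fin: "finite S" unfolding S_def by auto
  have "card S \<le> card (f1 ` ({..<q}\<times>{..<3})) + card (f2 ` ({..<q}\<times>{..<3})) + card (g1 ` ({4*q..<n}\<times>{..<3})) + card (g2 ` ({4*q..<m}\<times>{..<3}))"
    unfolding S_def by (rule card4) auto
  also have "\<dots> \<le> card ({..<q}\<times>{..<3::nat}) + card ({..<q}\<times>{..<3::nat}) + card ({4*q..<n}\<times>{..<3::nat}) + card ({4*q..<m}\<times>{..<3::nat})"
    by (intro add_mono card_image_le) auto
  also have "\<dots> = 3*q + 3*q + 3*(n - 4*q) + 3*(m - 4*q)" by (simp add: card_cartesian_product)
  finally have cS: "card S \<le> 3*q + 3*q + 3*(n - 4*q) + 3*(m - 4*q)" .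
  have bound: "2 * card S \<le> 3*n + 36 + 6*k" using cS q4 unfolding m_def by linarith
  have mf1: "f1 (b,r) \<in> S" if "b<q" "r<3" for b r unfolding S_def using that by auto
  have mf2: "f2 (b,r) \<in> S" if "b<q" "r<3" for b r unfolding S_def using that by auto
  have mg1: "g1 (i,r) \<in> S" if "4*q \<le> i" "i<n" "r<3" for i r unfolding S_def using that by auto
  have mg2: "g2 (j,r) \<in> S" if "4*q \<le> j" "j<m" "r<3" for j r unfolding S_def using that by auto
  have sub: "S \<subseteq> cart_verts (K_verts n) (K_verts m)"
    unfolding S_def cart_verts_def K_verts_def f1_def f2_def g1_def g2_def using q4 nm n4 by auto
  have roww: "\<exists>j. (i,j) \<in> S" if i: "i < n" for i
  proof (cases "i < 4*q")
    case True
    have b: "i div 4 < q" using True by auto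
    have e: "4*(i div 4) + i mod 4 = i" by simp
    show ?thesis
    proof (cases "i mod 4 < 3")
      case True
      have "f1 (i div 4, i mod 4) = (i, 4*(i div 4)+3)" unfolding f1_def using e by simp
      thus ?thesis using mf1[OF b True] by metis
    next
      case False
      hence "i mod 4 = 3" by auto
      hence "f2 (i div 4, 0) = (i, 4*(i div 4))" unfolding f2_def using e by simp
      moreover have "f2 (i div 4, 0) \<in> S" using mf2[OF b] by simp
      ultimately show ?thesis by metis
    qed
  next
    case False
    have "g1 (i,0) = (i,0)" unfolding g1_def by simp
    thus ?thesis using mg1[of i 0] False i by fastforce
  qed
  have colw: "\<exists>i. (i,j) \<in> S" if j: "j < m" for j
  proof (cases "j < 4*q")
    case True
    have b: "j div 4 < q" using True by auto
    have e: "4*(j div 4) + j mod 4 = j" by simp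
    show ?thesis
    proof (cases "j mod 4 < 3")
      case True
      have "f2 (j div 4, j mod 4) = (4*(j div 4)+3, j)" unfolding f2_def using e by simp
      thus ?thesis using mf2[OF b True] by metis
    next
      case False
      hence "j mod 4 = 3" by auto
      hence "f1 (j div 4, 0) = (4*(j div 4), j)" unfolding f1_def using e by simp
      moreover have "f1 (j div 4, 0) \<in> S" using mf1[OF b] by simp
      ultimately show ?thesis by metis
    qed
  next
    case False
    have "g2 (j,0) = (0,j)" unfolding g2_def by simp
    thus ?thesis using mg2[of j 0] False j by fastforce
  qed
  have dom: "\<forall>v\<in>cart_verts (K_verts n) (K_verts m). 2 \<le> card {u\<in>S. cart_adj K_adj K_adj v u}"
  proof
    fix v assume "v \<in> cart_verts (K_verts n) (K_verts m)"
    then obtain i j where v: "v = (i,j)" "i<n" "j<m" by (auto simp: cart_verts_def K_verts_def)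
    let ?N = "{u\<in>S. cart_adj K_adj K_adj v u}"
    have finN: "finite ?N" using fin by simp
    show "2 \<le> card ?N"
    proof (cases "v \<in> S")
      case False
      obtain j1 where j1: "(i,j1) \<in> S" using roww v by blast
      obtain i1 where i1: "(i1,j) \<in> S" using colw v by blast
      show ?thesis
        apply (rule card_ge2[OF finN, of "(i,j1)" "(i1,j)"])
        using False j1 i1 v by (auto simp: adj_iff)
    next
      case True
      then consider (a) b r where "b<q" "r<3" "v = f1 (b,r)" | (b) b r where "b<q" "r<3" "v = f2 (b,r)"
        | (c) i' r where "4*q \<le> i'" "i'<n" "r<3" "v = g1 (i',r)"
        | (d) j' r where "4*q \<le> j'" "j'<m" "r<3" "v = g2 (j',r)"
        unfolding S_def by (elim UnE imageE) (auto simp: mem_Times_iff)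
      then show ?thesis
      proof cases
        case a
        obtain r' r'' where rr: "r' < 3" "r'' < 3" "r' \<noteq> r" "r'' \<noteq> r" "r' \<noteq> r''" using three[OF a(2)] by blast
        show ?thesis
          apply (rule card_ge2[OF finN, of "f1 (b, r')" "f1 (b, r'')"])
          using a rr mf1[OF a(1) rr(1)] mf1[OF a(1) rr(2)] by (auto simp: adj_iff f1_def)
      next
        case b
        obtain r' r'' where rr: "r' < 3" "r'' < 3" "r' \<noteq> r" "r'' \<noteq> r" "r' \<noteq> r''" using three[OF b(2)] by blast
        show ?thesis
          apply (rule card_ge2[OF finN, of "f2 (b, r')" "f2 (b, r'')"])
          using b rr mf2[OF b(1) rr(1)] mf2[OF b(1) rr(2)] by (auto simp: adj_iff f2_def)
      next
        case c
        obtain r' r'' where rr: "r' < 3" "r'' < 3" "r' \<noteq> r" "r'' \<noteq> r" "r' \<noteq> r''" using three[OF c(3)] by blast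
        show ?thesis
          apply (rule card_ge2[OF finN, of "g1 (i', r')" "g1 (i', r'')"])
          using c rr mg1[OF c(1,2) rr(1)] mg1[OF c(1,2) rr(2)] by (auto simp: adj_iff g1_def)
      next
        case d
        obtain r' r'' where rr: "r' < 3" "r'' < 3" "r' \<noteq> r" "r'' \<noteq> r" "r' \<noteq> r''" using three[OF d(3)] by blast
        show ?thesis
          apply (rule card_ge2[OF finN, of "g2 (j', r')" "g2 (j', r'')"])
          using d rr mg2[OF d(1,2) rr(1)] mg2[OF d(1,2) rr(2)] by (auto simp: adj_iff g2_def)
      qed
    qed
  qed
  show ?thesis using fin sub dom bound unfolding total_k_dominating_def m_def by blast
qed

theorem theorem17:
  fixes k :: nat
  shows "(\<lambda>n. real (gamma_kt 2 (cart_verts (K_verts n) (K_verts (n + k))) (cart_adj K_adj K_adj)) / real n)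
           \<longlonglongrightarrow> 3 / 2"
proof -
  define g where "g n = gamma_kt 2 (cart_verts (K_verts n) (K_verts (n + k))) (cart_adj K_adj K_adj)" for n
  have bounds: "3*n \<le> 2*g n \<and> 2*g n \<le> 3*n+36+6*k" if n4: "4 \<le> n" for n
  proof -
    let ?P = "\<lambda>m. \<exists>S. finite S \<and> total_k_dominating 2 (cart_verts (K_verts n) (K_verts (n + k))) (cart_adj K_adj K_adj) S \<and> card S = m"
    obtain S where S: "finite S" "total_k_dominating 2 (cart_verts (K_verts n) (K_verts (n+k))) (cart_adj K_adj K_adj) S"
        "2 * card S \<le> 3*n + 36 + 6*k" using upper[OF n4, of k] by blast
    have PS: "?P (card S)" using S by blast
    have le: "g n \<le> card S" unfolding g_def gamma_kt_def by (rule Least_le) (rule PS)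
    have "?P (g n)" unfolding g_def gamma_kt_def by (rule LeastI) (rule PS)
    then obtain S0 where S0: "finite S0" "total_k_dominating 2 (cart_verts (K_verts n) (K_verts (n+k))) (cart_adj K_adj K_adj) S0"
       "card S0 = g n" by blast
    have "3*n \<le> 2 * card S0" by (rule lower[OF S0(1) _ S0(2)]) simp
    thus ?thesis using le S(3) S0(3) by linarith
  qed
  define C where "C = (36 + 6 * real k) / 2"
  have lo: "eventually (\<lambda>n. 3/2 \<le> real (g n) / real n) sequentially"
  proof (rule eventually_sequentiallyI[of 4])
    fix n :: nat assume n: "4 \<le> n"
    hence "real (3*n) \<le> real (2 * g n)" using bounds[OF n] by linarith
    thus "3/2 \<le> real (g n) / real n" using n by (simp add: field_simps)
  qed
  have hi: "eventually (\<lambda>n. real (g n) / real n \<le> 3/2 + C / real n) sequentially"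
  proof (rule eventually_sequentiallyI[of 4])
    fix n :: nat assume n: "4 \<le> n"
    hence "real (2 * g n) \<le> real (3*n+36+6*k)" using bounds[OF n] by linarith
    thus "real (g n) / real n \<le> 3/2 + C / real n" using n unfolding C_def by (simp add: field_simps)
  qed
  have lim: "(\<lambda>n. 3/2 + C / real n) \<longlonglongrightarrow> 3/2 + 0"
    by (intro tendsto_add tendsto_const lim_const_over_n)
  have "(\<lambda>n. real (g n) / real n) \<longlonglongrightarrow> 3/2"
    by (rule tendsto_sandwich[OF lo hi tendsto_const]) (use lim in simp)
  thus ?thesis unfolding g_def .
qed

end
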